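(* Let $G \ne K_4$ be a connected, claw-free, cubic graph that is not a diamond-necklace $N_k$ for any $k\ge 2$. Then there exists a triangle-unit $T'$ of $G$ such that the graph $G - V(T')$ has at most two components.
   Context: A graph is claw-free if it has no induced subgraph isomorphic to $K_{1,3}$; it is cubic if every vertex has degree $3$. A diamond is an induced subgraph isomorphic to $K_4$ minus one edge. For a connected, claw-free, cubic graph $G\neq K_4$, the vertex set $V(G)$ can be uniquely partitioned into sets each of which induces a triangle or a diamond in $G$; the parts are called units, a triangle-unit being a part inducing a triangle. Diamond-necklace: for $k\ge 2$, take $k$ disjoint diamonds $D_1,\dots,D_k$ with $V(D_i)=\{a_i,b_i,c_i,d_i\}$ where $a_ib_i$ is the missing edge, and add the edges $a_ib_{i+1}$ for $i\in\{1,\dots,k-1\}$ and the edge $a_kb_1$; the result is $N_k$. *)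

theory Defs
  imports Main
begin

definition simple_graph :: "'a set \<Rightarrow> ('a \<Rightarrow> 'a \<Rightarrow> bool) \<Rightarrow> bool" where
  "simple_graph V E \<longleftrightarrow> finite V \<and> (\<forall>x y. E x y \<longrightarrow> x \<in> V \<and> y \<in> V)
     \<and> (\<forall>x y. E x y \<longrightarrow> E y x) \<and> (\<forall>x. \<not> E x x)"

definition neighbours :: "'a set \<Rightarrow> ('a \<Rightarrow> 'a \<Rightarrow> bool) \<Rightarrow> 'a \<Rightarrow> 'a set" where
  "neighbours V E x = {y \<in> V. E x y}"

definition cubic :: "'a set \<Rightarrow> ('a \<Rightarrow> 'a \<Rightarrow> bool) \<Rightarrow> bool" where
  "cubic V E \<longleftrightarrow> (\<forall>x\<in>V. card (neighbours V E x) = 3)"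

definition claw_free :: "'a set \<Rightarrow> ('a \<Rightarrow> 'a \<Rightarrow> bool) \<Rightarrow> bool" where
  "claw_free V E \<longleftrightarrow> \<not> (\<exists>x\<in>V. \<exists>a\<in>V. \<exists>b\<in>V. \<exists>c\<in>V.
      a \<noteq> b \<and> a \<noteq> c \<and> b \<noteq> c \<and> E x a \<and> E x b \<and> E x c
      \<and> \<not> E a b \<and> \<not> E a c \<and> \<not> E b c)"

definition restr :: "('a \<Rightarrow> 'a \<Rightarrow> bool) \<Rightarrow> 'a set \<Rightarrow> 'a \<Rightarrow> 'a \<Rightarrow> bool" where
  "restr E S x y \<longleftrightarrow> E x y \<and> x \<in> S \<and> y \<in> S"

definition connected_graph :: "'a set \<Rightarrow> ('a \<Rightarrow> 'a \<Rightarrow> bool) \<Rightarrow> bool" where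
  "connected_graph V E \<longleftrightarrow> V \<noteq> {} \<and> (\<forall>x\<in>V. \<forall>y\<in>V. (restr E V)\<^sup>*\<^sup>* x y)"

definition components_minus :: "'a set \<Rightarrow> ('a \<Rightarrow> 'a \<Rightarrow> bool) \<Rightarrow> 'a set \<Rightarrow> 'a set set" where
  "components_minus V E S = (\<lambda>x. {y \<in> V - S. (restr E (V - S))\<^sup>*\<^sup>* x y}) ` (V - S)"

definition induces_triangle :: "'a set \<Rightarrow> ('a \<Rightarrow> 'a \<Rightarrow> bool) \<Rightarrow> 'a set \<Rightarrow> bool" where
  "induces_triangle V E S \<longleftrightarrow> S \<subseteq> V \<and> card S = 3 \<and> (\<forall>x\<in>S. \<forall>y\<in>S. x \<noteq> y \<longrightarrow> E x y)"

definition induces_diamond :: "'a set \<Rightarrow> ('a \<Rightarrow> 'a \<Rightarrow> bool) \<Rightarrow> 'a set \<Rightarrow> bool" where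
  "induces_diamond V E S \<longleftrightarrow> S \<subseteq> V \<and> card S = 4 \<and>
     (\<exists>a\<in>S. \<exists>b\<in>S. a \<noteq> b \<and> \<not> E a b \<and>
        (\<forall>x\<in>S. \<forall>y\<in>S. x \<noteq> y \<and> {x, y} \<noteq> {a, b} \<longrightarrow> E x y))"

definition unit_partition :: "'a set \<Rightarrow> ('a \<Rightarrow> 'a \<Rightarrow> bool) \<Rightarrow> 'a set set \<Rightarrow> bool" where
  "unit_partition V E P \<longleftrightarrow> \<Union>P = V \<and> (\<forall>A\<in>P. \<forall>B\<in>P. A \<noteq> B \<longrightarrow> A \<inter> B = {})
     \<and> (\<forall>A\<in>P. induces_triangle V E A \<or> induces_diamond V E A)"

text \<open>A triangle-unit: a part of the (unique) unit partition inducing a triangle.\<close>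
definition triangle_unit :: "'a set \<Rightarrow> ('a \<Rightarrow> 'a \<Rightarrow> bool) \<Rightarrow> 'a set \<Rightarrow> bool" where
  "triangle_unit V E T \<longleftrightarrow> (\<exists>P. unit_partition V E P \<and> T \<in> P \<and> induces_triangle V E T)"

definition graph_iso :: "'a set \<Rightarrow> ('a \<Rightarrow> 'a \<Rightarrow> bool) \<Rightarrow> 'b set \<Rightarrow> ('b \<Rightarrow> 'b \<Rightarrow> bool) \<Rightarrow> bool" where
  "graph_iso V E W F \<longleftrightarrow> (\<exists>f. bij_betw f V W \<and> (\<forall>x\<in>V. \<forall>y\<in>V. E x y \<longleftrightarrow> F (f x) (f y)))"

definition is_K4 :: "'a set \<Rightarrow> ('a \<Rightarrow> 'a \<Rightarrow> bool) \<Rightarrow> bool" where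
  "is_K4 V E \<longleftrightarrow> card V = 4 \<and> (\<forall>x\<in>V. \<forall>y\<in>V. x \<noteq> y \<longrightarrow> E x y)"

text \<open>Diamond-necklace N_k: vertex (i,j), i < k the diamond index (0-based),
  j = 0,1,2,3 standing for a_i, b_i, c_i, d_i; a_i b_i is the missing edge;
  extra edges a_i b_{(i+1) mod k}.\<close>
definition necklace_V :: "nat \<Rightarrow> (nat \<times> nat) set" where
  "necklace_V k = {(i, j). i < k \<and> j < 4}"

definition necklace_E :: "nat \<Rightarrow> nat \<times> nat \<Rightarrow> nat \<times> nat \<Rightarrow> bool" where
  "necklace_E k u v \<longleftrightarrow> u \<in> necklace_V k \<and> v \<in> necklace_V k \<and>
     ((fst u = fst v \<and> snd u \<noteq> snd v \<and> {snd u, snd v} \<noteq> {0, 1})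
      \<or> (snd u = 0 \<and> snd v = 1 \<and> fst v = (fst u + 1) mod k)
      \<or> (snd u = 1 \<and> snd v = 0 \<and> fst u = (fst v + 1) mod k))"

end

theory Submission
  imports Defs
begin

definition dm :: "('a \<Rightarrow> 'a \<Rightarrow> bool) \<Rightarrow> 'a \<Rightarrow> 'a \<Rightarrow> 'a \<Rightarrow> 'a \<Rightarrow> bool" where
  "dm E a b c d \<longleftrightarrow> a \<noteq> b \<and> a \<noteq> c \<and> a \<noteq> d \<and> b \<noteq> c \<and> b \<noteq> d \<and> c \<noteq> d \<and>
     \<not> E a b \<and> E a c \<and> E a d \<and> E b c \<and> E b d \<and> E c d"

definition tri :: "('a \<Rightarrow> 'a \<Rightarrow> bool) \<Rightarrow> 'a \<Rightarrow> 'a \<Rightarrow> 'a \<Rightarrow> bool" where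
  "tri E x y z \<longleftrightarrow> x \<noteq> y \<and> x \<noteq> z \<and> y \<noteq> z \<and> E x y \<and> E x z \<and> E y z"

locale cg =
  fixes V :: "'a set" and E :: "'a \<Rightarrow> 'a \<Rightarrow> bool"
  assumes sg: "simple_graph V E"
    and conn: "connected_graph V E"
    and cf: "claw_free V E"
    and cub: "cubic V E"
    and nK4: "\<not> is_K4 V E"
begin

lemma finV: "finite V" using sg by (simp add: simple_graph_def)
lemma symE: "E x y \<Longrightarrow> E y x" using sg by (simp add: simple_graph_def)
lemma inV1: "E x y \<Longrightarrow> x \<in> V" using sg by (simp add: simple_graph_def)
lemma inV2: "E x y \<Longrightarrow> y \<in> V" using sg by (simp add: simple_graph_def)
lemma irr: "\<not> E x x" using sg by (simp add: simple_graph_def)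
lemma neq: "E x y \<Longrightarrow> x \<noteq> y" using irr by blast

lemma nbcard: "x \<in> V \<Longrightarrow> card (neighbours V E x) = 3"
  using cub by (simp add: cubic_def)

lemma nbfin: "finite (neighbours V E x)"
  using finV by (simp add: neighbours_def)

lemma nb3ex: assumes "x \<in> V" obtains a b c where "a \<noteq> b" "a \<noteq> c" "b \<noteq> c"
  "E x a" "E x b" "E x c" "\<And>z. E x z \<Longrightarrow> z = a \<or> z = b \<or> z = c"
proof -
  from nbcard[OF assms] obtain a b c where h: "neighbours V E x = {a,b,c}" "a \<noteq> b" "b \<noteq> c" "a \<noteq> c"
    by (auto simp: card_3_iff)
  have "E x a" "E x b" "E x c" using h(1) unfolding neighbours_def by blast+
  moreover have "\<And>z. E x z \<Longrightarrow> z = a \<or> z = b \<or> z = c"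
  proof -
    fix z assume "E x z"
    then have "z \<in> neighbours V E x" using inV2 by (simp add: neighbours_def)
    then show "z = a \<or> z = b \<or> z = c" using h(1) by blast
  qed
  ultimately show ?thesis using that h by blast
qed

lemma nb3: assumes "E x a" "E x b" "E x c" "a \<noteq> b" "a \<noteq> c" "b \<noteq> c" "E x z"
  shows "z = a \<or> z = b \<or> z = c"
proof -
  have x: "x \<in> V" using assms(1) inV1 by blast
  have s: "{a,b,c} \<subseteq> neighbours V E x" using assms inV2 by (auto simp: neighbours_def)
  have "card {a,b,c} = 3" using assms by auto
  then have "{a,b,c} = neighbours V E x" using card_subset_eq[OF nbfin s] nbcard[OF x] by simp
  moreover have "z \<in> neighbours V E x" using assms(7) inV2 by (simp add: neighbours_def)
  ultimately show ?thesis by blast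
qed

lemma closure_all:
  assumes "S \<subseteq> V" "s0 \<in> S" "\<And>x y. x \<in> S \<Longrightarrow> E x y \<Longrightarrow> y \<in> S"
  shows "S = V"
proof -
  have "v \<in> S" if "v \<in> V" for v
  proof -
    have "(restr E V)\<^sup>*\<^sup>* s0 v" using conn assms(1,2) that by (auto simp: connected_graph_def)
    then show ?thesis
      by (induction rule: rtranclp_induct) (use assms in \<open>auto simp: restr_def\<close>)
  qed
  then show ?thesis using assms(1) by blast
qed

lemma noK4: assumes "a \<noteq> b" "a \<noteq> c" "a \<noteq> d" "b \<noteq> c" "b \<noteq> d" "c \<noteq> d"
  "E a b" "E a c" "E a d" "E b c" "E b d" "E c d" shows False
proof -
  have cl: "y \<in> {a,b,c,d}" if "x \<in> {a,b,c,d}" "E x y" for x y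
    using that nb3[of a b c d y] nb3[of b a c d y] nb3[of c a b d y] nb3[of d a b c y] assms symE
    by (metis insert_iff singletonD)
  have "{a,b,c,d} = V" by (rule closure_all) (use cl assms inV1 inV2 in auto)
  then have "is_K4 V E" using assms symE unfolding is_K4_def by auto
  then show False using nK4 by blast
qed


lemma dm_sym1: "dm E a b c d \<Longrightarrow> dm E b a c d" unfolding dm_def using symE by blast
lemma dm_sym2: "dm E a b c d \<Longrightarrow> dm E a b d c" unfolding dm_def using symE by blast

lemma L3_cc: assumes "dm E a b c d" "dm E a' b' c d'"
  shows "{a,b,c,d} = {a',b',c,d'}"
proof -
  have n: "E c z \<Longrightarrow> z = a \<or> z = b \<or> z = d" for z
    using nb3[of c a b d z] assms(1) symE unfolding dm_def by blast
  have "a' \<in> {a,b,d}" "b' \<in> {a,b,d}" "d' \<in> {a,b,d}" using n assms(2) symE unfolding dm_def by blast+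
  moreover have "a' \<noteq> b'" "a' \<noteq> d'" "b' \<noteq> d'" using assms(2) unfolding dm_def by blast+
  ultimately show ?thesis by auto
qed

lemma L3_ac: assumes "dm E a b c d" "dm E a' b' a d'"
  shows "{a,b,c,d} = {a',b',a,d'}"
proof -
  have n: "E a z \<Longrightarrow> z = a' \<or> z = b' \<or> z = d'" for z
    using nb3[of a a' b' d' z] assms(2) symE unfolding dm_def by blast
  have nc: "E c z \<Longrightarrow> z = a \<or> z = b \<or> z = d" for z
    using nb3[of c a b d z] assms(1) symE unfolding dm_def by blast
  have nd: "E d z \<Longrightarrow> z = a \<or> z = b \<or> z = c" for z
    using nb3[of d a b c z] assms(1) symE unfolding dm_def by blast
  have "c \<in> {a',b',d'}" "d \<in> {a',b',d'}" using n assms(1) unfolding dm_def by blast+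
  then have cd: "c \<in> {a',b',d'}" "d \<in> {a',b',d'}" .
  have "E c d" "c \<noteq> d" using assms(1) unfolding dm_def by auto
  moreover have "\<not> E a' b'" "\<not> E b' a'" using assms(2) symE unfolding dm_def by blast+
  ultimately have d'cd: "d' \<in> {c,d}" and ab: "a' \<in> {c,d} \<or> b' \<in> {c,d}" using cd by auto
  have nd': "E d' z \<Longrightarrow> z = a \<or> z = b \<or> (z \<in> {c,d} \<and> z \<noteq> d')" for z
    using d'cd nc nd neq by blast
  show ?thesis using ab
  proof
    assume a'cd: "a' \<in> {c,d}"
    then have "{c,d} = {a',d'}" using d'cd assms(2) unfolding dm_def by auto
    moreover have "b' = b"
      using nd'[of b'] assms(2) calculation symE unfolding dm_def by auto
    ultimately show ?thesis by auto
  next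
    assume b'cd: "b' \<in> {c,d}"
    then have "{c,d} = {b',d'}" using d'cd assms(2) unfolding dm_def by auto
    moreover have "a' = b"
      using nd'[of a'] assms(2) calculation symE unfolding dm_def by auto
    ultimately show ?thesis by auto
  qed
qed


lemma third_nb: assumes "E a c" "E a d" "c \<noteq> d"
  obtains x where "E a x" "x \<noteq> c" "x \<noteq> d" "\<And>z. E a z \<Longrightarrow> z = c \<or> z = d \<or> z = x"
proof -
  have a: "a \<in> V" using assms(1) inV1 by blast
  have s: "{c,d} \<subseteq> neighbours V E a" using assms inV2 by (auto simp: neighbours_def)
  have "card {c,d} = 2" using assms(3) by simp
  then have "{c,d} \<noteq> neighbours V E a" using nbcard[OF a] by auto
  then obtain x where x: "x \<in> neighbours V E a" "x \<notin> {c,d}" using s by blast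
  then have "E a x" by (simp add: neighbours_def)
  moreover have "\<And>z. E a z \<Longrightarrow> z = c \<or> z = d \<or> z = x"
    using nb3[of a c d x] assms x(2) \<open>E a x\<close> by blast
  ultimately show ?thesis using that x(2) by blast
qed

lemma dmD: assumes "dm E a b c d"
  shows "a \<noteq> b" "a \<noteq> c" "a \<noteq> d" "b \<noteq> c" "b \<noteq> d" "c \<noteq> d" "\<not> E a b" "\<not> E b a"
    "E a c" "E a d" "E b c" "E b d" "E c d" "E c a" "E d a" "E c b" "E d b" "E d c"
  using assms symE unfolding dm_def by auto

lemma dm_nbc: assumes "dm E a b c d" "E c z" shows "z = a \<or> z = b \<or> z = d"
  using nb3[of c a b d z] dmD[OF assms(1)] assms(2) by blast

lemma L3_aa: assumes "dm E a b c d" "dm E a b' c' d'"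
  shows "{a,b,c,d} = {a,b',c',d'}"
proof -
  note A = dmD[OF assms(1)] and B = dmD[OF assms(2)]
  obtain x where x: "E a x" "x \<noteq> c" "x \<noteq> d" "\<And>z. E a z \<Longrightarrow> z = c \<or> z = d \<or> z = x"
    using third_nb[of a c d] A by blast
  have nc: "E c z \<Longrightarrow> z = a \<or> z = b \<or> z = d" for z
    using dm_nbc[OF assms(1)] by blast
  have nd: "E d z \<Longrightarrow> z = a \<or> z = b \<or> z = c" for z
    using dm_nbc[OF dm_sym2[OF assms(1)]] by blast
  have cd': "c' \<in> {c,d,x}" "d' \<in> {c,d,x}" using x(4) B(9,10) by blast+
  have xa: "x \<noteq> a" "x \<noteq> b" using x(1) A(7) neq by blast+
  have xc': "x \<noteq> c'"
  proof
    assume h: "x = c'"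
    then have "d' \<in> {c,d}" using cd' B(6) by auto
    then show False using nc nd B(18) h xa x(2,3) by blast
  qed
  have xd': "x \<noteq> d'"
  proof
    assume h: "x = d'"
    then have "c' \<in> {c,d}" using cd' B(6) by auto
    then show False using nc nd B(13) h xa x(2,3) by blast
  qed
  have cd2: "{c',d'} = {c,d}" using cd' xc' xd' B(6) by auto
  have "b' \<noteq> a" "b' \<noteq> c" "b' \<noteq> d" using cd2 B(1,4,5) by auto
  moreover have "c' = c \<or> c' = d" using cd2 by auto
  ultimately have "b' = b" using nc nd B(16) by blast
  then show ?thesis using cd2 by auto
qed

lemma dm_norm: assumes "dm E a b c d" "v \<in> {a,b,c,d}"
  shows "\<exists>p q r s. dm E p q r s \<and> {p,q,r,s} = {a,b,c,d} \<and> (v = p \<or> v = r)"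
proof -
  have "v = a \<or> v = b \<or> v = c \<or> v = d" using assms(2) by blast
  then show ?thesis
  proof (elim disjE)
    assume "v = a" then show ?thesis using assms(1) by blast
  next
    assume "v = b" then show ?thesis using dm_sym1[OF assms(1)] by (intro exI[of _ b] exI[of _ a] exI[of _ c] exI[of _ d]) auto
  next
    assume "v = c" then show ?thesis using assms(1) by blast
  next
    assume "v = d" then show ?thesis using dm_sym2[OF assms(1)] by (intro exI[of _ a] exI[of _ b] exI[of _ d] exI[of _ c]) auto
  qed
qed

lemma L3: assumes "dm E a b c d" "dm E a' b' c' d'" "v \<in> {a,b,c,d}" "v \<in> {a',b',c',d'}"
  shows "{a,b,c,d} = {a',b',c',d'}"
proof -
  obtain p q r s where 1: "dm E p q r s" "{p,q,r,s} = {a,b,c,d}" "v = p \<or> v = r"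
    using dm_norm[OF assms(1,3)] by blast
  obtain p' q' r' s' where 2: "dm E p' q' r' s'" "{p',q',r',s'} = {a',b',c',d'}" "v = p' \<or> v = r'"
    using dm_norm[OF assms(2,4)] by blast
  have "{p,q,r,s} = {p',q',r',s'}"
    using 1(3) 2(3)
  proof (elim disjE)
    assume "v = p" "v = p'" then show ?thesis using L3_aa[OF 1(1), of q' r' s'] 2(1) by simp
  next
    assume "v = p" "v = r'" then show ?thesis using L3_ac[OF 1(1), of p' q' s'] 2(1) by simp
  next
    assume "v = r" "v = p'" then show ?thesis using L3_ac[OF 2(1), of p q s] 1(1) by simp
  next
    assume "v = r" "v = r'" then show ?thesis using L3_cc[OF 1(1), of p' q' s'] 2(1) by simp
  qed
  then show ?thesis using 1(2) 2(2) by simp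
qed


definition india :: "'a \<Rightarrow> bool" where
  "india v \<longleftrightarrow> (\<exists>a b c d. dm E a b c d \<and> v \<in> {a,b,c,d})"

lemma triD: assumes "tri E x y z"
  shows "x \<noteq> y" "x \<noteq> z" "y \<noteq> z" "E x y" "E x z" "E y z" "E y x" "E z x" "E z y"
  using assms symE unfolding tri_def by auto

lemma tri_perm: "tri E x y z \<Longrightarrow> tri E y x z" "tri E x y z \<Longrightarrow> tri E x z y"
  unfolding tri_def using symE by blast+

lemma L1: assumes "v \<in> V" shows "\<exists>y z. tri E v y z"
proof -
  obtain a b c where h: "a \<noteq> b" "a \<noteq> c" "b \<noteq> c" "E v a" "E v b" "E v c"
      "\<And>z. E v z \<Longrightarrow> z = a \<or> z = b \<or> z = c"
    using nb3ex[OF assms] by blast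
  have nc: "\<not> (a \<noteq> b \<and> a \<noteq> c \<and> b \<noteq> c \<and> E v a \<and> E v b \<and> E v c
      \<and> \<not> E a b \<and> \<not> E a c \<and> \<not> E b c)"
    using cf assms inV2[OF h(4)] inV2[OF h(5)] inV2[OF h(6)] unfolding claw_free_def by blast
  have "E a b \<or> E a c \<or> E b c" using nc h by blast
  then show ?thesis
  proof (elim disjE)
    assume "E a b" then have "tri E v a b" unfolding tri_def using h neq[OF h(4)] neq[OF h(5)] by blast
    then show ?thesis by blast
  next
    assume "E a c" then have "tri E v a c" unfolding tri_def using h neq[OF h(4)] neq[OF h(6)] by blast
    then show ?thesis by blast
  next
    assume "E b c" then have "tri E v b c" unfolding tri_def using h neq[OF h(5)] neq[OF h(6)] by blast
    then show ?thesis by blast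
  qed
qed

lemma L4: assumes "tri E x y z" "dm E a b c d" "x \<in> {a,b,c,d}" shows "y \<in> {a,b,c,d}"
proof -
  obtain p q r s where 1: "dm E p q r s" "{p,q,r,s} = {a,b,c,d}" "x = p \<or> x = r"
    using dm_norm[OF assms(2,3)] by blast
  note T = triD[OF assms(1)] and D = dmD[OF 1(1)]
  have "y \<in> {p,q,r,s}" using 1(3)
  proof
    assume "x = r" then show ?thesis using dm_nbc[OF 1(1)] T by blast
  next
    assume xp: "x = p"
    show ?thesis
    proof (rule ccontr)
      assume yn: "y \<notin> {p,q,r,s}"
      show False
      proof (cases "z \<in> {p,q,r,s}")
        case True
        then have "z = r \<or> z = s" using xp T D by auto
        then show False using dm_nbc[OF 1(1)] dm_nbc[OF dm_sym2[OF 1(1)]] T yn by blast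
      next
        case False
        then show False using nb3[of p r s y z] xp T D yn by auto
      qed
    qed
  qed
  then show ?thesis using 1(2) by simp
qed

lemma L2: assumes "tri E x y z" "tri E x y' z'" "{y,z} \<noteq> {y',z'}" shows "india x"
proof -
  have key: "india x" if t1: "tri E x y z" and t2: "tri E x y' z'" and y'n: "y' \<noteq> y" "y' \<noteq> z" for y z y' z'
  proof -
    note A = triD[OF t1] and B = triD[OF t2]
    have "z' = y \<or> z' = z" using nb3[OF A(4) A(5) B(4) A(3) y'n(1)[symmetric] y'n(2)[symmetric] B(5)] B(3) by blast
    then show ?thesis
    proof
      assume h: "z' = y"
      have yy: "E y y'" "E y' y" using B(6,9) h by simp_all
      have "\<not> E z y'"
      proof
        assume "E z y'"
        then show False using noK4[OF A(1) A(2) B(1) A(3) y'n(1)[symmetric] y'n(2)[symmetric] A(4) A(5) B(4) A(6) yy(1)] by blast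
      qed
      then have "\<not> E y' z" using symE[of y' z] by blast
      then have "dm E z y' x y" unfolding dm_def using A B h y'n yy \<open>\<not> E z y'\<close> by simp
      then show ?thesis unfolding india_def by blast
    next
      assume h: "z' = z"
      have zz: "E z y'" "E y' z" using B(6,9) h by simp_all
      have "\<not> E y y'"
      proof
        assume "E y y'"
        then show False using noK4[OF A(1) A(2) B(1) A(3) y'n(1)[symmetric] y'n(2)[symmetric] A(4) A(5) B(4) A(6)] zz by blast
      qed
      then have "\<not> E y' y" using symE[of y' y] by blast
      then have "dm E y y' x z" unfolding dm_def using A B h y'n zz \<open>\<not> E y y'\<close> by simp
      then show ?thesis unfolding india_def by blast
    qed
  qed
  have "(y' \<noteq> y \<and> y' \<noteq> z) \<or> (z' \<noteq> y \<and> z' \<noteq> z)" using assms(3) triD(3)[OF assms(2)] by auto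
  then show ?thesis using key[OF assms(1,2)] key[OF assms(1) tri_perm(2)[OF assms(2)]] by blast
qed


definition tunit :: "'a set \<Rightarrow> bool" where
  "tunit T \<longleftrightarrow> (\<exists>x y z. tri E x y z \<and> T = {x,y,z} \<and> \<not> india x \<and> \<not> india y \<and> \<not> india z)"

definition Pset :: "'a set set" where
  "Pset = {S. \<exists>a b c d. dm E a b c d \<and> S = {a,b,c,d}} \<union> Collect tunit"

lemma dm_inV: assumes "dm E a b c d" shows "{a,b,c,d} \<subseteq> V"
  using dmD(9,11,13,18)[OF assms] inV1 by auto

lemma tri_inV: assumes "tri E x y z" shows "{x,y,z} \<subseteq> V"
  using triD(4,6,8)[OF assms] inV1 by auto

lemma dm_induces: assumes "dm E a b c d" shows "induces_diamond V E {a,b,c,d}"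
proof -
  note D = dmD[OF assms]
  have "card {a,b,c,d} = 4" using D by auto
  moreover have "\<forall>x\<in>{a,b,c,d}. \<forall>y\<in>{a,b,c,d}. x \<noteq> y \<and> {x, y} \<noteq> {a, b} \<longrightarrow> E x y"
    using D by (auto simp: doubleton_eq_iff)
  ultimately show ?thesis unfolding induces_diamond_def using dm_inV[OF assms] D by blast
qed

lemma tri_induces: assumes "tri E x y z" shows "induces_triangle V E {x,y,z}"
proof -
  note D = triD[OF assms]
  have "card {x,y,z} = 3" using D by auto
  then show ?thesis unfolding induces_triangle_def using tri_inV[OF assms] D by auto
qed

lemma tri_norm: assumes "tri E x y z" "w \<in> {x,y,z}"
  shows "\<exists>y' z'. tri E w y' z' \<and> {x,y,z} = {w,y',z'}"
proof -
  have "w = x \<or> w = y \<or> w = z" using assms(2) by blast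
  then show ?thesis
  proof (elim disjE)
    assume "w = x" then show ?thesis using assms(1) by blast
  next
    assume "w = y" then show ?thesis using tri_perm(1)[OF assms(1)] by (intro exI[of _ x] exI[of _ z]) auto
  next
    assume "w = z" then show ?thesis using tri_perm(1)[OF tri_perm(2)[OF assms(1)]]
      by (intro exI[of _ x] exI[of _ y]) auto
  qed
qed

lemma tunit_disj: assumes "tunit A" "tunit B" "A \<noteq> B" shows "A \<inter> B = {}"
proof (rule ccontr)
  assume "A \<inter> B \<noteq> {}"
  then obtain w where w: "w \<in> A" "w \<in> B" by blast
  obtain x y z where a: "tri E x y z" "A = {x,y,z}" "\<not> india x" "\<not> india y" "\<not> india z"
    using assms(1) unfolding tunit_def by blast
  obtain x' y' z' where b: "tri E x' y' z'" "B = {x',y',z'}"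
    using assms(2) unfolding tunit_def by blast
  obtain p q where p: "tri E w p q" "A = {w,p,q}" using tri_norm[OF a(1)] a(2) w(1) by metis
  obtain p' q' where p': "tri E w p' q'" "B = {w,p',q'}" using tri_norm[OF b(1)] b(2) w(2) by metis
  have "\<not> india w" using a w(1) by blast
  then have "{p,q} = {p',q'}" using L2[OF p(1) p'(1)] by blast
  then show False using p(2) p'(2) assms(3) by auto
qed

lemma unit_part: "unit_partition V E Pset"
proof -
  have cov: "\<Union>Pset = V"
  proof
    show "\<Union>Pset \<subseteq> V" unfolding Pset_def tunit_def using dm_inV tri_inV by blast
  next
    show "V \<subseteq> \<Union>Pset"
    proof
      fix v assume v: "v \<in> V"
      show "v \<in> \<Union>Pset"
      proof (cases "india v")
        case True then show ?thesis unfolding india_def Pset_def by blast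
      next
        case False
        obtain y z where t: "tri E v y z" using L1[OF v] by blast
        have "\<not> india y" using L4[OF tri_perm(1)[OF t]] False unfolding india_def by blast
        moreover have "\<not> india z" using L4[OF tri_perm(1)[OF tri_perm(2)[OF t]]] False unfolding india_def by blast
        ultimately have "tunit {v,y,z}" using t False unfolding tunit_def by blast
        then show ?thesis unfolding Pset_def by blast
      qed
    qed
  qed
  have dis: "A \<inter> B = {}" if "A \<in> Pset" "B \<in> Pset" "A \<noteq> B" for A B
  proof -
    have dd: "A \<inter> B = {}" if "A = {a,b,c,d}" "dm E a b c d" "tunit B" for A B a b c d
      using that unfolding tunit_def india_def by blast
    show ?thesis using that unfolding Pset_def
    proof (elim UnE CollectE exE conjE)
      fix a b c d a' b' c' d' assume "dm E a b c d" "A = {a,b,c,d}" "dm E a' b' c' d'" "B = {a',b',c',d'}"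
      then show ?thesis using L3 that(3) by blast
    qed (use dd tunit_disj that(3) in blast)+
  qed
  have ind: "induces_triangle V E A \<or> induces_diamond V E A" if "A \<in> Pset" for A
    using that unfolding Pset_def tunit_def using dm_induces tri_induces by blast
  show ?thesis unfolding unit_partition_def using cov dis ind by blast
qed

lemma tunit_tu: assumes "tunit T" shows "triangle_unit V E T"
  using assms unit_part tri_induces unfolding triangle_unit_def Pset_def tunit_def by blast

end

context cg begin

definition comp :: "'a set \<Rightarrow> 'a \<Rightarrow> 'a set" where
  "comp S v = {y \<in> V - S. (restr E (V - S))\<^sup>*\<^sup>* v y}"

lemma cm_eq: "components_minus V E S = comp S ` (V - S)"
  unfolding components_minus_def comp_def by simp

lemma R_sym: "(restr E A)\<^sup>*\<^sup>* a b \<Longrightarrow> (restr E A)\<^sup>*\<^sup>* b a"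
proof (induction rule: rtranclp_induct)
  case base then show ?case by simp
next
  case (step y z)
  then have "restr E A z y" using symE unfolding restr_def by blast
  then show ?case using step(3) by (meson converse_rtranclp_into_rtranclp)
qed

lemma R_V: "(restr E A)\<^sup>*\<^sup>* a b \<Longrightarrow> a \<in> A \<Longrightarrow> b \<in> A"
  by (induction rule: rtranclp_induct) (auto simp: restr_def)

lemma comp_sub: "comp S v \<subseteq> V - S" unfolding comp_def by blast

lemma comp_self: "v \<in> V - S \<Longrightarrow> v \<in> comp S v" unfolding comp_def by simp

lemma comp_eq: assumes "(restr E (V - S))\<^sup>*\<^sup>* v w" shows "comp S v = comp S w"
  unfolding comp_def using assms R_sym[OF assms]
  by (auto intro: rtranclp_trans)

lemma comp_mem: "u \<in> comp S v \<Longrightarrow> comp S u = comp S v"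
  unfolding comp_def using comp_eq[of S v u] by (auto simp: comp_def)

lemma comp_edge: assumes "u \<in> comp S v" "E u w" "w \<notin> S" shows "w \<in> comp S v"
proof -
  have "u \<in> V - S" "(restr E (V - S))\<^sup>*\<^sup>* v u" using assms(1) unfolding comp_def by auto
  moreover have "w \<in> V" using assms(2) inV2 by blast
  ultimately have "restr E (V - S) u w" using assms unfolding restr_def by blast
  then show ?thesis using assms(1) \<open>w \<in> V\<close> assms(3) unfolding comp_def
    by (auto intro: rtranclp.rtrancl_into_rtrancl)
qed

lemma comp_disj: "w \<in> comp S u \<Longrightarrow> w \<in> comp S v \<Longrightarrow> comp S u = comp S v"
  using comp_mem by metis

lemma path_in_comp: assumes "(restr E (V - S))\<^sup>*\<^sup>* u w"
  shows "(restr E (comp S u))\<^sup>*\<^sup>* u w"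
  using assms
proof (induction rule: rtranclp_induct)
  case base then show ?case by simp
next
  case (step y z)
  have "y \<in> comp S u" "z \<in> comp S u" using step unfolding comp_def restr_def
    by (auto intro: rtranclp.rtrancl_into_rtrancl)
  then have "restr E (comp S u) y z" using step(2) unfolding restr_def by blast
  then show ?case using step(3) by (auto intro: rtranclp.rtrancl_into_rtrancl)
qed

lemma R_mono: "(restr E A)\<^sup>*\<^sup>* u w \<Longrightarrow> A \<subseteq> B \<Longrightarrow> (restr E B)\<^sup>*\<^sup>* u w"
proof -
  assume "(restr E A)\<^sup>*\<^sup>* u w" "A \<subseteq> B"
  moreover have "restr E A \<le> restr E B" using \<open>A \<subseteq> B\<close> unfolding restr_def by auto
  ultimately show ?thesis using rtranclp_mono by blast
qed

lemma exit_path: assumes "(restr E V)\<^sup>*\<^sup>* w u" "w \<in> V - S" "u \<in> S"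
  shows "\<exists>w' t. (restr E (V - S))\<^sup>*\<^sup>* w w' \<and> w' \<in> V - S \<and> t \<in> S \<and> E w' t"
  using assms
proof (induction rule: converse_rtranclp_induct)
  case base then show ?case by blast
next
  case (step y z)
  show ?case
  proof (cases "z \<in> S")
    case True then show ?thesis using step unfolding restr_def by blast
  next
    case False
    then have z: "z \<in> V - S" using step(1) unfolding restr_def by blast
    then obtain w' t where h: "(restr E (V - S))\<^sup>*\<^sup>* z w'" "w' \<in> V - S" "t \<in> S" "E w' t"
      using step by blast
    have "restr E (V - S) y z" using step(1,4) z unfolding restr_def by blast
    then show ?thesis using h by (meson converse_rtranclp_into_rtranclp)
  qed
qed


definition out :: "'a set \<Rightarrow> 'a \<Rightarrow> 'a" where
  "out T t = (SOME u. E t u \<and> u \<notin> T)"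

lemma out_core: assumes "tri E x y z"
  shows "\<exists>w. E x w \<and> w \<notin> {x,y,z} \<and> (\<forall>u. E x u \<and> u \<notin> {x,y,z} \<longrightarrow> u = w)"
proof -
  note A = triD[OF assms]
  obtain w where w: "E x w" "w \<noteq> y" "w \<noteq> z" "\<And>u. E x u \<Longrightarrow> u = y \<or> u = z \<or> u = w"
    using third_nb[OF A(4) A(5) A(3)] by blast
  have "w \<noteq> x" using neq[OF w(1)] by simp
  then show ?thesis using w by blast
qed

lemma out_prop: assumes "tunit T" "t \<in> T"
  shows "E t (out T t)" "out T t \<notin> T" "\<And>u. E t u \<Longrightarrow> u \<notin> T \<Longrightarrow> u = out T t"
proof -
  obtain x y z where t: "tri E x y z" "T = {x,y,z}" using assms(1) unfolding tunit_def by blast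
  obtain y' z' where t': "tri E t y' z'" "T = {t,y',z'}" using tri_norm[OF t(1)] t(2) assms(2) by metis
  obtain w where w: "E t w" "w \<notin> T" "\<forall>u. E t u \<and> u \<notin> T \<longrightarrow> u = w"
    using out_core[OF t'(1)] t'(2) by metis
  have "E t (out T t) \<and> out T t \<notin> T" unfolding out_def using w(1,2) by (rule someI[where x = w, OF conjI])
  then show "E t (out T t)" "out T t \<notin> T" by blast+
  show "\<And>u. E t u \<Longrightarrow> u \<notin> T \<Longrightarrow> u = out T t"
    using w \<open>E t (out T t) \<and> out T t \<notin> T\<close> by metis
qed

lemma tunit_fin: "tunit T \<Longrightarrow> finite T \<and> card T = 3 \<and> T \<subseteq> V"
  unfolding tunit_def using triD tri_inV by fastforce

lemma tunit_adj: assumes "tunit T" "t \<in> T" "x \<in> T" "t \<noteq> x" shows "E t x"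
  using assms unfolding tunit_def tri_def using symE by blast

lemma out_V: assumes "tunit T" "t \<in> T" shows "out T t \<in> V - T"
  using out_prop[OF assms] inV2 by blast

lemma comp_has_out: assumes "tunit T" "w \<in> V - T"
  shows "\<exists>t\<in>T. comp T w = comp T (out T t)"
proof -
  obtain x where x: "x \<in> T" using assms(1) unfolding tunit_def by blast
  have "(restr E V)\<^sup>*\<^sup>* w x" using conn assms(2) x tunit_fin[OF assms(1)]
    unfolding connected_graph_def by blast
  then obtain w' t where h: "(restr E (V - T))\<^sup>*\<^sup>* w w'" "w' \<in> V - T" "t \<in> T" "E w' t"
    using exit_path[OF _ assms(2) x] by blast
  have "w' = out T t" using out_prop(3)[OF assms(1) h(3)] h(2,4) symE by blast
  then show ?thesis using comp_eq[OF h(1)] h(3) by blast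
qed

lemma cm_sub: assumes "tunit T" shows "components_minus V E T \<subseteq> (\<lambda>t. comp T (out T t)) ` T"
  unfolding cm_eq using comp_has_out[OF assms] by blast

lemma three_inj: assumes "tunit T" "card (components_minus V E T) \<ge> 3"
  shows "inj_on (\<lambda>t. comp T (out T t)) T"
proof -
  have f: "finite T" "card T = 3" using tunit_fin[OF assms(1)] by auto
  have "card (components_minus V E T) \<le> card ((\<lambda>t. comp T (out T t)) ` T)"
    using cm_sub[OF assms(1)] f(1) by (simp add: card_mono)
  moreover have "card ((\<lambda>t. comp T (out T t)) ` T) \<le> card T" using card_image_le f(1) by blast
  ultimately have "card ((\<lambda>t. comp T (out T t)) ` T) = card T" using assms(2) f(2) by linarith
  then show ?thesis using inj_on_iff_eq_card f(1) by blast
qed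

lemma even_inner: "finite S \<Longrightarrow> even (card {(a,b). a \<in> S \<and> b \<in> S \<and> E a b})"
proof (induction S rule: finite_induct)
  case empty then show ?case by simp
next
  case (insert z S)
  let ?P = "\<lambda>S. {(a,b). a \<in> S \<and> b \<in> S \<and> E a b}"
  let ?L = "{(z,b) | b. b \<in> S \<and> E z b}"
  let ?R = "{(a,z) | a. a \<in> S \<and> E a z}"
  have eq: "?P (insert z S) = ?P S \<union> (?L \<union> ?R)" using irr by auto
  have fin: "finite (?P S)" by (rule finite_subset[of _ "S \<times> S"]) (use insert in auto)
  have L: "?L = (\<lambda>b. (z,b)) ` {b \<in> S. E z b}" by auto
  have R: "?R = (\<lambda>a. (a,z)) ` {b \<in> S. E z b}" using symE by auto
  have cL: "card ?L = card {b \<in> S. E z b}" unfolding L by (rule card_image) (auto simp: inj_on_def)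
  have cR: "card ?R = card {b \<in> S. E z b}" unfolding R by (rule card_image) (auto simp: inj_on_def)
  have fL: "finite ?L" unfolding L using insert by simp
  have fR: "finite ?R" unfolding R using insert by simp
  have dLR: "?L \<inter> ?R = {}" using irr by auto
  have d: "?P S \<inter> (?L \<union> ?R) = {}" using insert(2) by auto
  have "card (?P (insert z S)) = card (?P S) + (card ?L + card ?R)"
    unfolding eq using card_Un_disjoint[OF fin _ d] card_Un_disjoint[OF fL fR dLR] fL fR by simp
  then show ?case using insert(3) cL cR by simp
qed

lemma handshake: assumes "S \<subseteq> V"
  shows "3 * card S = card {(a,b). a \<in> S \<and> b \<in> S \<and> E a b} + card {(a,b). a \<in> S \<and> b \<notin> S \<and> E a b}"
proof -
  have fS: "finite S" using finV assms finite_subset by blast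
  have sig: "{(a,b). a \<in> S \<and> E a b} = Sigma S (neighbours V E)"
    unfolding neighbours_def using inV2 by auto
  have "card (Sigma S (neighbours V E)) = (\<Sum>a\<in>S. card (neighbours V E a))"
    using fS nbfin by simp
  also have "\<dots> = (\<Sum>a\<in>S. 3)" using nbcard assms by (intro sum.cong) auto
  also have "\<dots> = 3 * card S" by simp
  finally have c: "card {(a,b). a \<in> S \<and> E a b} = 3 * card S" using sig by simp
  have fin: "finite {(a,b). a \<in> S \<and> E a b}" unfolding sig using fS nbfin by simp
  have un: "{(a,b). a \<in> S \<and> E a b} = {(a,b). a \<in> S \<and> b \<in> S \<and> E a b} \<union> {(a,b). a \<in> S \<and> b \<notin> S \<and> E a b}"
    by auto
  have "card {(a,b). a \<in> S \<and> E a b} = card {(a,b). a \<in> S \<and> b \<in> S \<and> E a b} + card {(a,b). a \<in> S \<and> b \<notin> S \<and> E a b}"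
    unfolding un by (rule card_Un_disjoint) (use fin un in \<open>auto intro: finite_subset\<close>)
  then show ?thesis using c by simp
qed


lemma boundary: assumes "tunit T" "inj_on (\<lambda>t. comp T (out T t)) T" "x \<in> T"
  shows "{(a,b). a \<in> comp T (out T x) \<and> b \<notin> comp T (out T x) \<and> E a b} = {(out T x, x)}"
proof -
  let ?C = "comp T (out T x)"
  have ox: "out T x \<in> V - T" using out_V[OF assms(1,3)] .
  have "(a,b) = (out T x, x)" if h: "a \<in> ?C" "b \<notin> ?C" "E a b" for a b
  proof -
    have bT: "b \<in> T" using comp_edge[OF h(1) h(3)] h(2) by blast
    have aT: "a \<notin> T" using h(1) comp_sub by blast
    have "a = out T b" using out_prop(3)[OF assms(1) bT] symE[OF h(3)] aT by blast
    then have "comp T (out T b) = ?C" using comp_mem[OF h(1)] by simp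
    then have "b = x" using assms(2) bT assms(3) unfolding inj_on_def by blast
    then show ?thesis using \<open>a = out T b\<close> by simp
  qed
  moreover have "out T x \<in> ?C" using comp_self[OF ox] .
  moreover have "x \<notin> ?C" using comp_sub assms(3) by blast
  moreover have "E (out T x) x" using out_prop(1)[OF assms(1,3)] symE by blast
  ultimately show ?thesis by auto
qed

lemma odd_comp: assumes "tunit T" "inj_on (\<lambda>t. comp T (out T t)) T" "x \<in> T"
  shows "odd (card (comp T (out T x)))"
proof -
  let ?C = "comp T (out T x)"
  have sub: "?C \<subseteq> V" using comp_sub by blast
  have fin: "finite ?C" using finite_subset[OF sub finV] .
  have "3 * card ?C = card {(a,b). a \<in> ?C \<and> b \<in> ?C \<and> E a b} + 1"
    using handshake[OF sub] boundary[OF assms] by simp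
  moreover have "\<And>n m::nat. 3 * n = m + 1 \<Longrightarrow> even m \<Longrightarrow> odd n" by presburger
  ultimately show ?thesis using even_inner[OF fin] by blast
qed

definition Dsets :: "'a set set" where
  "Dsets = {D. \<exists>a b c d. dm E a b c d \<and> D = {a,b,c,d}}"

lemma dm_conn: assumes "dm E a b c d" "p \<in> {a,b,c,d}" "q \<in> {a,b,c,d}" "{a,b,c,d} \<subseteq> V - S"
  shows "(restr E (V - S))\<^sup>*\<^sup>* p q"
proof -
  note D = dmD[OF assms(1)]
  have "p = c \<or> restr E (V - S) p c" using assms(2,4) D unfolding restr_def by auto
  moreover have "q = c \<or> restr E (V - S) c q" using assms(3,4) D unfolding restr_def by auto
  ultimately show ?thesis by (metis converse_rtranclp_into_rtranclp r_into_rtranclp rtranclp.rtrancl_refl)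
qed

lemma comp_has_nondia: assumes "tunit T" "C \<in> components_minus V E T" "odd (card C)"
  shows "\<exists>w\<in>C. \<not> india w"
proof (rule ccontr)
  assume "\<not> (\<exists>w\<in>C. \<not> india w)"
  then have all: "\<forall>w\<in>C. india w" by blast
  obtain v where v: "v \<in> V - T" "C = comp T v" using assms(2) unfolding cm_eq by blast
  let ?D = "{D \<in> Dsets. D \<subseteq> C}"
  have TnD: "\<not> india t" if "t \<in> T" for t using assms(1) that unfolding tunit_def by blast
  have cov: "\<Union>?D = C"
  proof
    show "\<Union>?D \<subseteq> C" by blast
  next
    show "C \<subseteq> \<Union>?D"
    proof
      fix w assume w: "w \<in> C"
      then obtain a b c d where abcd: "dm E a b c d" "w \<in> {a,b,c,d}" using all unfolding india_def by blast
      have sub: "{a,b,c,d} \<subseteq> V - T" using dm_inV[OF abcd(1)] TnD abcd(1) unfolding india_def by blast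
      have "{a,b,c,d} \<subseteq> C"
      proof
        fix p assume p: "p \<in> {a,b,c,d}"
        have "(restr E (V - T))\<^sup>*\<^sup>* w p" using dm_conn[OF abcd(1) abcd(2) p sub] .
        then have "comp T w = comp T p" by (rule comp_eq)
        moreover have "comp T w = C" using comp_mem w v(2) by blast
        ultimately show "p \<in> C" using comp_self[of p T] p sub by blast
      qed
      then show "w \<in> \<Union>?D" using abcd unfolding Dsets_def by blast
    qed
  qed
  have pw: "pairwise disjnt ?D"
  proof (rule pairwiseI)
    fix D1 D2 assume h: "D1 \<in> ?D" "D2 \<in> ?D" "D1 \<noteq> D2"
    obtain a b c d where 1: "dm E a b c d" "D1 = {a,b,c,d}" using h(1) unfolding Dsets_def by blast
    obtain a' b' c' d' where 2: "dm E a' b' c' d'" "D2 = {a',b',c',d'}" using h(2) unfolding Dsets_def by blast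
    show "disjnt D1 D2"
    proof (rule ccontr)
      assume "\<not> disjnt D1 D2"
      then obtain v where "v \<in> D1" "v \<in> D2" unfolding disjnt_def by blast
      then have "D1 = D2" using L3[OF 1(1) 2(1)] 1(2) 2(2) by blast
      then show False using h(3) by blast
    qed
  qed
  have finD: "finite ?D"
    by (rule finite_subset[of _ "Pow V"]) (use comp_sub v finV in auto)
  have "card C = sum card ?D" using card_Union_disjoint[OF pw] cov unfolding Dsets_def by fastforce
  also have "\<dots> = sum (\<lambda>_. 4) ?D"
  proof (rule sum.cong)
    fix D assume "D \<in> ?D"
    then obtain a b c d where "dm E a b c d" "D = {a,b,c,d}" unfolding Dsets_def by blast
    then show "card D = 4" using dmD by auto
  qed simp
  also have "\<dots> = 4 * card ?D" by simp
  finally have "even (card C)" by simp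
  then show False using assms(3) by simp
qed

lemma nondia_tunit: assumes "w \<in> V" "\<not> india w" shows "\<exists>y z. tunit {w,y,z}"
proof -
  obtain y z where t: "tri E w y z" using L1[OF assms(1)] by blast
  have "\<not> india y" using L4[OF tri_perm(1)[OF t]] assms(2) unfolding india_def by blast
  moreover have "\<not> india z" using L4[OF tri_perm(1)[OF tri_perm(2)[OF t]]] assms(2) unfolding india_def by blast
  ultimately show ?thesis using t assms(2) unfolding tunit_def by blast
qed


lemma tunit_in_comp: assumes "tunit T" "inj_on (\<lambda>t. comp T (out T t)) T" "x \<in> T"
  shows "\<exists>T'. tunit T' \<and> T' \<subseteq> comp T (out T x)"
proof -
  let ?C = "comp T (out T x)"
  have Cm: "?C \<in> components_minus V E T" unfolding cm_eq using out_V[OF assms(1,3)] by blast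
  obtain w where w: "w \<in> ?C" "\<not> india w" using comp_has_nondia[OF assms(1) Cm odd_comp[OF assms]] by blast
  have wV: "w \<in> V - T" using w(1) comp_sub by blast
  obtain y z where t: "tunit {w,y,z}" using nondia_tunit[of w] wV w(2) by blast
  have ne: "{w,y,z} \<noteq> T" using wV by blast
  have dis: "{w,y,z} \<inter> T = {}" using tunit_disj[OF t assms(1) ne] .
  have "card {w,y,z} = 3" using tunit_fin[OF t] by blast
  then have "w \<noteq> y" "w \<noteq> z" by (auto simp: card_insert_if split: if_split_asm)
  then have "E w y" "E w z" using tunit_adj[OF t] by blast+
  moreover have "y \<notin> T" "z \<notin> T" using dis by blast+
  ultimately have "y \<in> ?C" "z \<in> ?C" using comp_edge[OF w(1)] by blast+
  then show ?thesis using t w(1) by blast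
qed

lemma main: assumes ex: "\<exists>T. tunit T"
  shows "\<exists>T. tunit T \<and> card (components_minus V E T) < 3"
proof (rule ccontr)
  assume neg: "\<not> (\<exists>T. tunit T \<and> card (components_minus V E T) < 3)"
  have all3: "card (components_minus V E T) \<ge> 3" if "tunit T" for T
  proof -
    have "\<not> card (components_minus V E T) < 3" using neg that by blast
    then show ?thesis by simp
  qed
  define Q where "Q = {C. \<exists>T. tunit T \<and> C \<in> components_minus V E T}"
  obtain T0 where T0: "tunit T0" using ex by blast
  obtain x0 where "x0 \<in> T0" using T0 unfolding tunit_def by blast
  then have "comp T0 (out T0 x0) \<in> Q" unfolding Q_def cm_eq using T0 out_V[OF T0] by blast
  then have exQ: "\<exists>n C. C \<in> Q \<and> card C = n" by blast
  define n where "n = (LEAST n. \<exists>C. C \<in> Q \<and> card C = n)"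
  obtain C where C: "C \<in> Q" "card C = n" using LeastI_ex[OF exQ] unfolding n_def by blast
  have minC: "card C \<le> card C'" if "C' \<in> Q" for C'
  proof -
    have "n \<le> card C'" unfolding n_def by (rule Least_le) (use that in blast)
    then show ?thesis using C(2) by simp
  qed
  obtain T where T: "tunit T" "C \<in> components_minus V E T" using C(1) unfolding Q_def by blast
  obtain v where v: "v \<in> V - T" "C = comp T v" using T(2) unfolding cm_eq by blast
  obtain x where x: "x \<in> T" "C = comp T (out T x)" using comp_has_out[OF T(1) v(1)] v(2) by blast
  have inj: "inj_on (\<lambda>t. comp T (out T t)) T" using three_inj[OF T(1) all3[OF T(1)]] .
  obtain T' where T': "tunit T'" "T' \<subseteq> C" using tunit_in_comp[OF T(1) inj x(1)] x(2) by blast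
  have CV: "C \<subseteq> V - T" using x(2) comp_sub by blast
  have inj': "inj_on (\<lambda>t. comp T' (out T' t)) T'" using three_inj[OF T'(1) all3[OF T'(1)]] .
  have xT': "x \<notin> T'" using T'(2) CV x(1) by blast
  have xV: "x \<in> V - T'" using x(1) tunit_fin[OF T(1)] xT' by blast
  obtain y where y: "y \<in> T'" "comp T' (out T' y) \<noteq> comp T' x"
  proof -
    have "\<not> (\<forall>y\<in>T'. comp T' (out T' y) = comp T' x)"
    proof
      assume h: "\<forall>y\<in>T'. comp T' (out T' y) = comp T' x"
      have "card T' = 3" using tunit_fin[OF T'(1)] by blast
      then obtain y1 y2 y3 where "T' = {y1,y2,y3}" "y1 \<noteq> y2" unfolding card_3_iff by blast
      then have "y1 \<in> T'" "y2 \<in> T'" "y1 \<noteq> y2" by auto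
      then have "comp T' (out T' y1) = comp T' (out T' y2)" using h by simp
      then show False using inj' \<open>y1 \<in> T'\<close> \<open>y2 \<in> T'\<close> \<open>y1 \<noteq> y2\<close> unfolding inj_on_def by blast
    qed
    then show ?thesis using that by blast
  qed
  let ?K = "comp T' (out T' y)"
  have oy: "out T' y \<in> V - T'" using out_V[OF T'(1) y(1)] .
  have KQ: "?K \<in> Q" unfolding Q_def cm_eq using T'(1) oy by blast
  have conn_x: "(restr E (V - T'))\<^sup>*\<^sup>* x u" if u: "u \<in> V - T'" "u \<notin> C" for u
  proof (cases "u \<in> T")
    case True
    then have "u = x \<or> E x u" using tunit_adj[OF T(1) x(1)] by blast
    then show ?thesis
    proof
      assume "u = x" then show ?thesis by simp
    next
      assume "E x u"
      then have "restr E (V - T') x u" using xV u(1) unfolding restr_def by blast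
      then show ?thesis by blast
    qed
  next
    case False
    then have uVT: "u \<in> V - T" using u by blast
    obtain t where t: "t \<in> T" "comp T u = comp T (out T t)" using comp_has_out[OF T(1) uVT] by blast
    have "out T t \<in> comp T u" using t(2) comp_self out_V[OF T(1) t(1)] by simp
    then have p: "(restr E (V - T))\<^sup>*\<^sup>* u (out T t)" unfolding comp_def by blast
    have "comp T u \<inter> C = {}"
    proof (rule ccontr)
      assume "comp T u \<inter> C \<noteq> {}"
      then obtain w where "w \<in> comp T u" "w \<in> C" by blast
      then have "comp T u = C" using comp_disj x(2) comp_mem by metis
      then show False using comp_self[OF uVT] u(2) by blast
    qed
    then have sub: "comp T u \<subseteq> V - T'" using T'(2) comp_sub by blast
    have p1: "(restr E (V - T'))\<^sup>*\<^sup>* u (out T t)" using R_mono[OF path_in_comp[OF p] sub] .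
    have tT': "t \<notin> T'" using t(1) T'(2) CV by blast
    have "out T t \<in> V - T'" using sub \<open>out T t \<in> comp T u\<close> by blast
    then have p2: "restr E (V - T') (out T t) t" using out_prop(1)[OF T(1) t(1)] symE tT' inV1 t(1) tunit_fin[OF T(1)]
      unfolding restr_def by blast
    have p3: "(restr E (V - T'))\<^sup>*\<^sup>* t x"
    proof (cases "t = x")
      case True then show ?thesis by simp
    next
      case False
      then have "E t x" using tunit_adj[OF T(1) t(1) x(1)] by blast
      then show ?thesis using tT' xV tunit_fin[OF T(1)] t(1) unfolding restr_def by blast
    qed
    have "(restr E (V - T'))\<^sup>*\<^sup>* u x" using p1 p2 p3 by (meson rtranclp.rtrancl_into_rtrancl rtranclp_trans)
    then show ?thesis using R_sym by blast
  qed
  have KC: "?K \<subseteq> C"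
  proof
    fix u assume uK: "u \<in> ?K"
    show "u \<in> C"
    proof (rule ccontr)
      assume "u \<notin> C"
      moreover have "u \<in> V - T'" using uK comp_sub by blast
      ultimately have "(restr E (V - T'))\<^sup>*\<^sup>* x u" using conn_x by blast
      then have "comp T' x = comp T' u" by (rule comp_eq)
      also have "\<dots> = ?K" using comp_mem[OF uK] .
      finally show False using y(2) by simp
    qed
  qed
  obtain y0 where "y0 \<in> T'" using y(1) by blast
  then have "y0 \<in> C" "y0 \<notin> ?K" using T'(2) comp_sub by blast+
  then have "?K \<subset> C" using KC by blast
  then have "card ?K < card C" using psubset_card_mono finite_subset[OF CV] finV by blast
  then show False using minC[OF KQ] by simp
qed

end

definition nbi :: "nat \<Rightarrow> nat \<times> nat \<Rightarrow> (nat \<times> nat) set" where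
  "nbi k u = (let i = fst u; p = snd u in
     if p = 0 then {(i,2),(i,3),((i+1) mod k,1)}
     else if p = 1 then {(i,2),(i,3),((i+k-1) mod k, 0)}
     else if p = 2 then {(i,0),(i,1),(i,3)} else {(i,0),(i,1),(i,2)})"

lemma mod_suc_eq: fixes j k :: nat assumes "j < k" shows "(j+1) mod k = (if j+1 = k then 0 else j+1)"
  using assms by (cases "j+1 = k") auto

lemma mod_pred_eq: fixes i k :: nat assumes "i < k" shows "(i+k-1) mod k = (if i = 0 then k-1 else i-1)"
proof (cases "i = 0")
  case True then show ?thesis using assms by simp
next
  case False
  then have "i+k-1 = (i-1) + k" by simp
  then have "(i+k-1) mod k = (i-1) mod k" by simp
  then show ?thesis using False assms by simp
qed

lemma mod_pred: fixes i j k :: nat assumes "i < k" "j < k" shows "j = (i+k-1) mod k \<longleftrightarrow> i = (j+1) mod k"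
  unfolding mod_suc_eq[OF assms(2)] mod_pred_eq[OF assms(1)] using assms by auto

lemma neck_nbi: assumes "i < k" "j < k" "p < 4" "q < 4" "k \<ge> 2"
  shows "necklace_E k (i,p) (j,q) \<longleftrightarrow> (j,q) \<in> nbi k (i,p)"
proof -
  have V: "(i,p) \<in> necklace_V k" "(j,q) \<in> necklace_V k" using assms unfolding necklace_V_def by auto
  have ne: "(i+1) mod k \<noteq> i" unfolding mod_suc_eq[OF assms(1)] using assms by auto
  have mp: "j = (i+k-1) mod k \<longleftrightarrow> i = (j+1) mod k" using mod_pred assms by blast
  have p4: "p = 0 \<or> p = 1 \<or> p = 2 \<or> p = 3" and q4: "q = 0 \<or> q = 1 \<or> q = 2 \<or> q = 3" using assms by auto
  show ?thesis using p4 q4 V ne mp unfolding necklace_E_def nbi_def Let_def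
    by (elim disjE) (auto simp: doubleton_eq_iff)
qed

locale cgd = cg +
  assumes alldia: "\<And>v. v \<in> V \<Longrightarrow> india v"
begin

definition endp :: "'a \<Rightarrow> bool" where "endp v \<longleftrightarrow> (\<exists>b c d. dm E v b c d)"
definition oth :: "'a \<Rightarrow> 'a" where "oth v = (SOME b. \<exists>c d. dm E v b c d)"
definition ext :: "'a \<Rightarrow> 'a" where "ext v = (SOME u. E v u \<and> endp u)"
definition mids :: "'a \<Rightarrow> 'a \<times> 'a" where "mids v = (SOME cd. dm E v (oth v) (fst cd) (snd cd))"

lemma oth_dm: assumes "endp v" shows "\<exists>c d. dm E v (oth v) c d"
  using assms unfolding endp_def oth_def by (metis (mono_tags, lifting) someI_ex)

lemma mids_dm: assumes "endp v" shows "dm E v (oth v) (fst (mids v)) (snd (mids v))"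
proof -
  obtain c d where "dm E v (oth v) c d" using oth_dm[OF assms] by blast
  then have "\<exists>cd. dm E v (oth v) (fst cd) (snd cd)" by (intro exI[of _ "(c,d)"]) simp
  then show ?thesis unfolding mids_def by (rule someI_ex)
qed

lemma oth_uniq: assumes "dm E v b c d" shows "b = oth v"
proof -
  have ev: "endp v" using assms unfolding endp_def by blast
  obtain c' d' where h: "dm E v (oth v) c' d'" using oth_dm[OF ev] by blast
  have "{v,b,c,d} = {v,oth v,c',d'}" using L3[OF assms h, of v] by simp
  then have m: "oth v \<in> {v,b,c,d}" by blast
  have 1: "E v c" "E v d" using dmD[OF assms] by blast+
  have 2: "v \<noteq> oth v" "\<not> E v (oth v)" using dmD[OF h] by blast+
  show ?thesis using m 1 2 by auto
qed

lemma mid_not_end: assumes "dm E a b c d" shows "\<not> endp c"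
proof
  assume "endp c"
  then obtain b' c' d' where h: "dm E c b' c' d'" unfolding endp_def by blast
  have "{a,b,c,d} = {c,b',c',d'}" using L3[OF assms h, of c] by simp
  then have m: "b' \<in> {a,b,c,d}" by blast
  have 1: "E c a" "E c b" "E c d" using dmD[OF assms] by blast+
  have 2: "c \<noteq> b'" "\<not> E c b'" using dmD[OF h] by blast+
  show False using m 1 2 by auto
qed

lemma end_oth: assumes "endp v" shows "endp (oth v)" "oth (oth v) = v" "oth v \<noteq> v" "\<not> E v (oth v)"
proof -
  obtain c d where h: "dm E v (oth v) c d" using oth_dm[OF assms] by blast
  have h2: "dm E (oth v) v c d" using dm_sym1[OF h] .
  show "endp (oth v)" using h2 unfolding endp_def by blast
  show "oth (oth v) = v" using oth_uniq[OF h2] by simp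
  show "oth v \<noteq> v" "\<not> E v (oth v)" using dmD(1,7)[OF h] by auto
qed

lemma ext_core: assumes "dm E v b c d"
  obtains x where "E v x" "endp x" "x \<noteq> c" "x \<noteq> d" "\<And>z. E v z \<Longrightarrow> z = c \<or> z = d \<or> z = x"
proof -
  note A = dmD[OF assms]
  obtain x where x: "E v x" "x \<noteq> c" "x \<noteq> d" "\<And>z. E v z \<Longrightarrow> z = c \<or> z = d \<or> z = x"
    using third_nb[OF A(9) A(10) A(6)] by blast
  have "x \<in> V" using inV2[OF x(1)] .
  then obtain p q r s where pq: "dm E p q r s" "x \<in> {p,q,r,s}" using alldia unfolding india_def by blast
  have "endp x"
  proof (cases "x = r \<or> x = s")
    case True
    have "v \<in> {p,q,r,s}"
    proof -
      have "E x v" using symE[OF x(1)] .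
      then show ?thesis using True dm_nbc[OF pq(1)] dm_nbc[OF dm_sym2[OF pq(1)]] by blast
    qed
    then have "{v,b,c,d} = {p,q,r,s}" using L3[OF assms pq(1), of v] by simp
    then have "x \<in> {v,b,c,d}" using pq(2) by blast
    moreover have "x \<noteq> v" using neq[OF x(1)] by simp
    moreover have "x \<noteq> b" using x(1) A(7) by blast
    ultimately show ?thesis using x(2,3) by blast
  next
    case False
    then have "x = p \<or> x = q" using pq(2) by blast
    then show ?thesis using pq(1) dm_sym1[OF pq(1)] unfolding endp_def by blast
  qed
  then show ?thesis using that x by blast
qed

lemma ext_prop: assumes "endp v" shows "E v (ext v)" "endp (ext v)"
proof -
  obtain b c d where h: "dm E v b c d" using assms unfolding endp_def by blast
  obtain x where "E v x" "endp x" using ext_core[OF h] by blast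
  then have "E v (ext v) \<and> endp (ext v)" unfolding ext_def by (rule someI[where x = x, OF conjI])
  then show "E v (ext v)" "endp (ext v)" by blast+
qed

lemma ext_uniq: assumes "endp v" "E v u" "endp u" shows "u = ext v"
proof -
  obtain b c d where h: "dm E v b c d" using assms unfolding endp_def by blast
  obtain x where x: "E v x" "endp x" "x \<noteq> c" "x \<noteq> d" "\<And>z. E v z \<Longrightarrow> z = c \<or> z = d \<or> z = x"
    using ext_core[OF h] by blast
  have nc: "\<not> endp c" "\<not> endp d" using mid_not_end[OF h] mid_not_end[OF dm_sym2[OF h]] by blast+
  have "u = x" using x(5)[OF assms(2)] nc assms(3) by blast
  moreover have "ext v = x" using x(5)[OF ext_prop(1)[OF assms(1)]] nc ext_prop(2)[OF assms(1)] by blast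
  ultimately show ?thesis by simp
qed

lemma ext_ext: assumes "endp v" shows "ext (ext v) = v"
  using ext_uniq[OF ext_prop(2)[OF assms] symE[OF ext_prop(1)[OF assms]] assms] by simp

lemma ext_ne: assumes "endp v" shows "ext v \<noteq> v" "ext v \<noteq> oth v"
  using ext_prop(1)[OF assms] neq[OF ext_prop(1)[OF assms]] end_oth(4)[OF assms] by auto


definition sx :: "'a \<Rightarrow> 'a" where "sx v = ext (oth v)"
definition x0 :: "'a" where "x0 = (SOME v. endp v)"
definition bs :: "nat \<Rightarrow> 'a" where "bs i = (sx ^^ i) x0"
definition kk :: nat where "kk = (LEAST p. p > 0 \<and> bs p = x0)"

lemma ex_end: "\<exists>v. endp v"
proof -
  obtain v where "v \<in> V" using conn unfolding connected_graph_def by blast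
  then obtain p q r s where "dm E p q r s" using alldia unfolding india_def by blast
  then show ?thesis unfolding endp_def by blast
qed

lemma end_x0: "endp x0" unfolding x0_def using ex_end by (rule someI_ex)

lemma sx_end: "endp v \<Longrightarrow> endp (sx v)" unfolding sx_def using ext_prop(2) end_oth(1) by blast

lemma bs_Suc: "bs (Suc i) = sx (bs i)" unfolding bs_def by simp

lemma bs_0: "bs 0 = x0" unfolding bs_def by simp

lemma bs_end: "endp (bs i)"
  by (induction i) (auto simp: bs_0 bs_Suc end_x0 sx_end)

lemma end_V: "endp v \<Longrightarrow> v \<in> V" unfolding endp_def using dm_inV by blast

lemma sx_inj: assumes "endp u" "endp v" "sx u = sx v" shows "u = v"
proof -
  have "ext (ext (oth u)) = ext (ext (oth v))" using assms(3) unfolding sx_def by simp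
  then have "oth u = oth v" using ext_ext end_oth(1) assms(1,2) by metis
  then show ?thesis using end_oth(2) assms(1,2) by metis
qed

lemma shift: "bs (i + n) = bs (j + n) \<Longrightarrow> bs i = bs j"
proof (induction n)
  case 0 then show ?case by simp
next
  case (Suc n)
  then have "sx (bs (i + n)) = sx (bs (j + n))" using bs_Suc by simp
  then have "bs (i + n) = bs (j + n)" using sx_inj bs_end by blast
  then show ?case using Suc(1) by blast
qed

lemma ex_period: "\<exists>p. p > 0 \<and> bs p = x0"
proof -
  have "range bs \<subseteq> V" using bs_end end_V by blast
  then have "finite (range bs)" using finV finite_subset by blast
  then have "\<not> inj bs" using finite_imageD[of bs UNIV] by auto
  then obtain i j where ij: "i \<noteq> j" "bs i = bs j" unfolding inj_def by blast
  have "\<exists>i j. i < j \<and> bs i = bs j"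
  proof (cases "i < j")
    case True then show ?thesis using ij by blast
  next
    case False then have "j < i" using ij(1) by simp
    then show ?thesis using ij(2) by metis
  qed
  then obtain i j where ij: "i < j" "bs i = bs j" by blast
  then have "bs (0 + i) = bs ((j - i) + i)" by simp
  then have "bs 0 = bs (j - i)" by (rule shift)
  then show ?thesis using ij(1) bs_0 by (intro exI[of _ "j - i"]) simp
qed

lemma kk_pos: "kk > 0" and kk_x0: "bs kk = x0"
  using LeastI_ex[OF ex_period] unfolding kk_def by blast+

lemma kk_min: "0 < p \<Longrightarrow> p < kk \<Longrightarrow> bs p \<noteq> x0"
  using not_less_Least[of p "\<lambda>p. p > 0 \<and> bs p = x0"] unfolding kk_def by blast

lemma bs_add: "bs (i + j) = (sx ^^ i) (bs j)" unfolding bs_def by (simp add: funpow_add)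

lemma bs_period: "bs (i + kk) = bs i" using bs_add[of i kk] kk_x0 unfolding bs_def by simp

lemma bs_period_n: "bs (i + n * kk) = bs i"
proof (induction n)
  case 0 then show ?case by simp
next
  case (Suc n)
  have "bs (i + Suc n * kk) = bs ((i + n * kk) + kk)" by (simp add: algebra_simps)
  also have "\<dots> = bs (i + n * kk)" by (rule bs_period)
  finally show ?case using Suc by simp
qed

lemma bs_mod: "bs i = bs (i mod kk)"
  using bs_period_n[of "i mod kk" "i div kk"] by (simp add: mod_div_mult_eq)

lemma bs_dist: assumes "i < kk" "j < kk" "bs i = bs j" shows "i = j"
proof (rule ccontr)
  assume ne: "i \<noteq> j"
  have key: "False" if h: "a < b" "b < kk" "bs a = bs b" for a b
  proof -
    have "bs (0 + a) = bs ((b - a) + a)" using h by simp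
    then have "bs 0 = bs (b - a)" by (rule shift)
    moreover have "0 < b - a" "b - a < kk" using h by auto
    ultimately show False using kk_min[of "b - a"] bs_0 by simp
  qed
  show False using ne assms key by (metis linorder_neqE_nat)
qed

lemma kk2: "kk \<ge> 2"
proof (rule ccontr)
  assume "\<not> kk \<ge> 2"
  then have "kk = 1" using kk_pos by simp
  then have "bs 1 = x0" using kk_x0 by simp
  then have "ext (oth x0) = x0" using bs_Suc[of 0] bs_0 unfolding sx_def by simp
  then have "ext x0 = oth x0" using ext_ext[OF end_oth(1)[OF end_x0]] by metis
  then show False using ext_ne(2)[OF end_x0] by simp
qed

lemma descent: "bs (i + d) \<noteq> oth (bs i)"
proof (induction d arbitrary: i rule: less_induct)
  case (less d)
  show ?case
  proof (cases "d = 0")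
    case True then show ?thesis using end_oth(3)[OF bs_end[of i]] by simp
  next
    case False
    show ?thesis
    proof (cases "d = 1")
      case True
      have "bs (i + 1) = ext (oth (bs i))" using bs_Suc[of i] unfolding sx_def by simp
      then show ?thesis using True ext_ne(1)[OF end_oth(1)[OF bs_end[of i]]] by simp
    next
      case False
      then have d2: "d \<ge> 2" using \<open>d \<noteq> 0\<close> by simp
      show ?thesis
      proof
        assume h: "bs (i + d) = oth (bs i)"
        have "ext (bs (i + d)) = bs (i + 1)" using h bs_Suc[of i] unfolding sx_def by simp
        moreover have "bs (i + d) = ext (oth (bs (i + d - 1)))"
          using bs_Suc[of "i + d - 1"] d2 unfolding sx_def by simp
        then have "ext (bs (i + d)) = oth (bs (i + d - 1))"
          using ext_ext[OF end_oth(1)[OF bs_end]] by simp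
        ultimately have "oth (bs (i + d - 1)) = bs (i + 1)" by simp
        then have "bs (i + d - 1) = oth (bs (i + 1))" using end_oth(2)[OF bs_end] by metis
        moreover have "i + d - 1 = (i + 1) + (d - 2)" using d2 by simp
        ultimately have "bs ((i + 1) + (d - 2)) = oth (bs (i + 1))" by simp
        then show False using less[of "d - 2" "i + 1"] d2 by simp
      qed
    qed
  qed
qed

lemma bs_not_oth: "bs j \<noteq> oth (bs i)"
proof (cases "i \<le> j")
  case True
  then show ?thesis using descent[of i "j - i"] by simp
next
  case False
  then have "bs i \<noteq> oth (bs j)" using descent[of j "i - j"] by simp
  then show ?thesis using end_oth(2)[OF bs_end[of i]] by metis
qed


definition m1 :: "'a \<Rightarrow> 'a" where "m1 v = fst (mids v)"
definition m2 :: "'a \<Rightarrow> 'a" where "m2 v = snd (mids v)"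

definition gg :: "nat \<times> nat \<Rightarrow> 'a" where
  "gg u = (if snd u = 0 then oth (bs (fst u)) else if snd u = 1 then bs (fst u)
     else if snd u = 2 then m1 (bs (fst u)) else m2 (bs (fst u)))"

lemma dmi: "dm E (bs i) (oth (bs i)) (m1 (bs i)) (m2 (bs i))"
  using mids_dm[OF bs_end[of i]] unfolding m1_def m2_def .

lemma gg_simps: "gg (i,0) = oth (bs i)" "gg (i,1) = bs i" "gg (i,2) = m1 (bs i)" "gg (i,3) = m2 (bs i)"
  unfolding gg_def by simp_all

lemma ext_a: "ext (oth (bs i)) = bs ((i+1) mod kk)"
  using bs_Suc[of i] bs_mod[of "Suc i"] unfolding sx_def by simp

lemma ext_b: assumes "i < kk" shows "ext (bs i) = oth (bs ((i+kk-1) mod kk))"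
proof -
  have "bs i = bs (Suc (i + kk - 1))" using bs_period[of i] kk_pos by simp
  also have "\<dots> = ext (oth (bs (i + kk - 1)))" using bs_Suc unfolding sx_def by simp
  finally have "ext (bs i) = oth (bs (i + kk - 1))" using ext_ext[OF end_oth(1)[OF bs_end]] by metis
  then show ?thesis using bs_mod[of "i + kk - 1"] by simp
qed

lemma nb_end: assumes "dm E v b c d" "endp x" "E v x"
  shows "E v w \<longleftrightarrow> w \<in> {c, d, x}"
proof -
  note A = dmD[OF assms(1)]
  have "x \<noteq> c" "x \<noteq> d" using assms(2) mid_not_end[OF assms(1)] mid_not_end[OF dm_sym2[OF assms(1)]] by blast+
  then show ?thesis using nb3[OF A(9) A(10) assms(3) A(6)] A(9,10) assms(3) by blast
qed

lemma nb_mid: assumes "dm E a b c d" shows "E c w \<longleftrightarrow> w \<in> {a, b, d}"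
  using dm_nbc[OF assms] dmD[OF assms] by blast

lemma gg_nb: assumes "i < kk" "p < 4" shows "E (gg (i,p)) w \<longleftrightarrow> w \<in> gg ` nbi kk (i,p)"
proof -
  have p4: "p = 0 \<or> p = 1 \<or> p = 2 \<or> p = 3" using assms by auto
  note D = dmi[of i]
  show ?thesis using p4
  proof (elim disjE)
    assume p: "p = 0"
    have "gg ` nbi kk (i,p) = {m1 (bs i), m2 (bs i), bs ((i+1) mod kk)}"
      unfolding p nbi_def by (auto simp: gg_def)
    moreover have "E (oth (bs i)) w \<longleftrightarrow> w \<in> {m1 (bs i), m2 (bs i), ext (oth (bs i))}"
      using nb_end[OF dm_sym1[OF D] ext_prop(2)[OF end_oth(1)[OF bs_end]] ext_prop(1)[OF end_oth(1)[OF bs_end]]] .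
    ultimately show ?thesis using p ext_a by (simp add: gg_def)
  next
    assume p: "p = 1"
    have "gg ` nbi kk (i,p) = {m1 (bs i), m2 (bs i), oth (bs ((i+kk-1) mod kk))}"
      unfolding p nbi_def by (auto simp: gg_def)
    moreover have "E (bs i) w \<longleftrightarrow> w \<in> {m1 (bs i), m2 (bs i), ext (bs i)}"
      using nb_end[OF D ext_prop(2)[OF bs_end] ext_prop(1)[OF bs_end]] .
    ultimately show ?thesis using p ext_b[OF assms(1)] by (simp add: gg_def)
  next
    assume p: "p = 2"
    have "gg ` nbi kk (i,p) = {oth (bs i), bs i, m2 (bs i)}"
      unfolding p nbi_def by (auto simp: gg_def)
    then show ?thesis using p nb_mid[OF dm_sym1[OF D]] by (simp add: gg_def)
  next
    assume p: "p = 3"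
    have "gg ` nbi kk (i,p) = {oth (bs i), bs i, m1 (bs i)}"
      unfolding p nbi_def by (auto simp: gg_def)
    then show ?thesis using p nb_mid[OF dm_sym2[OF dm_sym1[OF D]]] by (simp add: gg_def)
  qed
qed


lemma gg_inD: "p < 4 \<Longrightarrow> gg (i,p) \<in> {bs i, oth (bs i), m1 (bs i), m2 (bs i)}"
  unfolding gg_def by auto

lemma D_disj: assumes "i < kk" "j < kk" "w \<in> {bs i, oth (bs i), m1 (bs i), m2 (bs i)}"
  "w \<in> {bs j, oth (bs j), m1 (bs j), m2 (bs j)}" shows "i = j"
proof -
  have "{bs i, oth (bs i), m1 (bs i), m2 (bs i)} = {bs j, oth (bs j), m1 (bs j), m2 (bs j)}"
    using L3[OF dmi[of i] dmi[of j] assms(3,4)] .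
  then have m: "bs j \<in> {bs i, oth (bs i), m1 (bs i), m2 (bs i)}" by blast
  have "\<not> endp (m1 (bs i))" "\<not> endp (m2 (bs i))"
    using mid_not_end[OF dmi[of i]] mid_not_end[OF dm_sym2[OF dmi[of i]]] by blast+
  then have "bs j = bs i \<or> bs j = oth (bs i)" using m bs_end[of j] by auto
  then show ?thesis using bs_not_oth[of j i] bs_dist[OF assms(1,2)] by auto
qed

lemma gg_inj: "inj_on gg (necklace_V kk)"
proof (rule inj_onI)
  fix u v assume u: "u \<in> necklace_V kk" and v: "v \<in> necklace_V kk" and e: "gg u = gg v"
  obtain i p where ip: "u = (i,p)" "i < kk" "p < 4" using u unfolding necklace_V_def by blast
  obtain j q where jq: "v = (j,q)" "j < kk" "q < 4" using v unfolding necklace_V_def by blast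
  have "i = j" using D_disj[OF ip(2) jq(2) gg_inD[OF ip(3), of i]] gg_inD[OF jq(3), of j] e ip(1) jq(1) by simp
  moreover have "p = q"
  proof -
    note A = dmD[OF dmi[of i]]
    have p4: "p = 0 \<or> p = 1 \<or> p = 2 \<or> p = 3" and q4: "q = 0 \<or> q = 1 \<or> q = 2 \<or> q = 3" using ip jq by auto
    show ?thesis using p4 q4 e ip(1) jq(1) \<open>i = j\<close> A(1-6) by (elim disjE) (simp_all add: gg_def)
  qed
  ultimately show "u = v" using ip(1) jq(1) by simp
qed

lemma nbi_sub: assumes "i < kk" shows "nbi kk (i,p) \<subseteq> necklace_V kk"
  using assms kk_pos unfolding nbi_def necklace_V_def Let_def by auto

lemma gg_surj: "gg ` necklace_V kk = V"
proof (rule closure_all)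
  show "gg ` necklace_V kk \<subseteq> V"
  proof
    fix x assume "x \<in> gg ` necklace_V kk"
    then obtain i p where "x = gg (i,p)" "p < 4" unfolding necklace_V_def by blast
    then show "x \<in> V" using gg_inD dm_inV[OF dmi[of i]] by blast
  qed
  show "gg (0,0) \<in> gg ` necklace_V kk" using kk_pos unfolding necklace_V_def by auto
  fix x y assume x: "x \<in> gg ` necklace_V kk" and e: "E x y"
  then obtain i p where ip: "x = gg (i,p)" "i < kk" "p < 4" unfolding necklace_V_def by blast
  then have "y \<in> gg ` nbi kk (i,p)" using gg_nb e by blast
  then show "y \<in> gg ` necklace_V kk" using nbi_sub[OF ip(2)] by blast
qed

lemma neck_iso: "graph_iso V E (necklace_V kk) (necklace_E kk)"
proof -
  let ?N = "necklace_V kk"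
  have bij: "bij_betw gg ?N V" using gg_inj gg_surj unfolding bij_betw_def by blast
  let ?f = "inv_into ?N gg"
  have bf: "bij_betw ?f V ?N" using bij_betw_inv_into[OF bij] .
  have "E x y \<longleftrightarrow> necklace_E kk (?f x) (?f y)" if x: "x \<in> V" and y: "y \<in> V" for x y
  proof -
    have fx: "?f x \<in> ?N" "gg (?f x) = x" using x gg_surj by (auto intro: inv_into_into f_inv_into_f)
    have fy: "?f y \<in> ?N" "gg (?f y) = y" using y gg_surj by (auto intro: inv_into_into f_inv_into_f)
    obtain i p where ip: "?f x = (i,p)" "i < kk" "p < 4" using fx(1) unfolding necklace_V_def by blast
    obtain j q where jq: "?f y = (j,q)" "j < kk" "q < 4" using fy(1) unfolding necklace_V_def by blast
    have "E x y \<longleftrightarrow> gg (j,q) \<in> gg ` nbi kk (i,p)" using gg_nb[OF ip(2,3)] fx(2) fy(2) ip(1) jq(1) by metis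
    also have "\<dots> \<longleftrightarrow> (j,q) \<in> nbi kk (i,p)"
      using inj_on_image_mem_iff[OF gg_inj _ nbi_sub[OF ip(2)]] fy(1) jq(1) by metis
    also have "\<dots> \<longleftrightarrow> necklace_E kk (i,p) (j,q)" using neck_nbi[OF ip(2) jq(2) ip(3) jq(3) kk2] by simp
    finally show ?thesis using ip(1) jq(1) by simp
  qed
  then show ?thesis unfolding graph_iso_def using bf by blast
qed

end

context cg begin

lemma exists_tunit:
  assumes nn: "\<forall>k\<ge>2. \<not> graph_iso V E (necklace_V k) (necklace_E k)"
  shows "\<exists>T. tunit T"
proof (rule ccontr)
  assume no: "\<not> (\<exists>T. tunit T)"
  have alld: "india v" if "v \<in> V" for v
  proof (rule ccontr)
    assume "\<not> india v"
    then show False using nondia_tunit[OF that] no by blast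
  qed
  interpret D: cgd V E
    by (intro cgd.intro cgd_axioms.intro cg_axioms) (use alld in blast)
  show False using D.neck_iso D.kk2 nn by blast
qed

end

theorem lemma4p2:
  fixes V :: "'a set" and E :: "'a \<Rightarrow> 'a \<Rightarrow> bool"
  assumes "simple_graph V E"
    and "connected_graph V E"
    and "claw_free V E"
    and "cubic V E"
    and "\<not> is_K4 V E"
    and "\<forall>k\<ge>2. \<not> graph_iso V E (necklace_V k) (necklace_E k)"
  shows "\<exists>T. triangle_unit V E T \<and> card (components_minus V E T) \<le> 2"
proof -
  interpret G: cg V E using assms(1-5) by (intro cg.intro)
  obtain T where T: "G.tunit T" "card (components_minus V E T) < 3"
    using G.main[OF G.exists_tunit[OF assms(6)]] by blast
  show ?thesis using G.tunit_tu[OF T(1)] T(2) by (intro exI[of _ T]) simp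
qed

end
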